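(* Let $N\ge 1$, let $f:Z[1,N]\times\mathbb{R}\to\mathbb{R}$ be continuous in its second variable for every $k\in Z[1,N]$, and let $p:Z[1,N+2]\to\mathbb{R}$, $q:Z[1,N+1]\to\mathbb{R}$. Assume that (1) $\min_{k\in Z[1,N]}\lim_{s\to+\infty}\frac{f(k,s)}{s}>\alpha_1$ (the limits being assumed to exist in $(-\infty,+\infty]$); (2) there exists $S>0$ such that $f(k,-s)\le -f(k,s)$ for all $s\ge S$ and $k\in Z[1,N]$. Then $J$ is coercive on $E$ and the boundary value problem $$\Delta^2\big(p(k)\Delta^2 y(k-2)\big)+\Delta\big(q(k)\Delta y(k-1)\big)+f(k,y(k))=0\ \ (k\in Z[1,N]),\qquad y(-1)=y(0)=y(N+1)=y(N+2)=0$$ has at least one solution.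
   Context: $Z[a,b]=[a,b]\cap\mathbb{Z}$; $\Delta x(k)=x(k+1)-x(k)$, $\Delta^2=\Delta\circ\Delta$; $\Delta^2(p(k)\Delta^2y(k-2))$ means $\Delta^2$ applied to $k\mapsto p(k)\Delta^2 y(k-2)$, similarly for $\Delta(q(k)\Delta y(k-1))$. A solution is a function $y:Z[-1,N+2]\to\mathbb{R}$ satisfying the equation and boundary conditions. $E=\{y:Z[-1,N+2]\to\mathbb{R}\mid y(-1)=y(0)=y(N+1)=y(N+2)=0\}$ with norm $\|y\|=(\sum_{k=1}^N y(k)^2)^{1/2}$; $F(k,s)=\int_0^s f(k,t)dt$; $J(y)=\sum_{k=1}^{N+2}\frac{p(k)}{2}(\Delta^2 y(k-2))^2-\sum_{k=1}^{N+1}\frac{q(k)}{2}(\Delta y(k-1))^2+\sum_{k=1}^N F(k,y(k))$; $J$ is coercive if $J(y)\to+\infty$ as $\|y\|\to\infty$. $p_{\min}=\min_{Z[1,N+2]}p$, $q_{\max}=\max_{Z[1,N+1]}q$. With $\tilde y=(y(1),\dots,y(N))^T$, $V$ is the $(N+1)\times N$ matrix with $V\tilde y=(\Delta y(0),\dots,\Delta y(N))^T$ and $W$ the $(N+2)\times N$ matrix with $W\tilde y=(\Delta^2y(-1),\dots,\Delta^2y(N))^T$ for $y\in E$; $\lambda_1$, $\lambda_2$ are the smallest eigenvalues of $V^TV$ and $W^TW$. $\eta'(p)=\lambda_2$ if $p_{\min}\ge0$, $\eta'(p)=16$ if $p_{\min}<0$; $\eta(q)=\lambda_1$ if $q_{\max}<0$,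 $\eta(q)=4$ if $q_{\max}\ge0$; $\alpha_1=\eta(q)q_{\max}-\eta'(p)p_{\min}$. *)

theory Defs
  imports "HOL-Analysis.Analysis"
begin

definition fdiff :: "(int \<Rightarrow> real) \<Rightarrow> int \<Rightarrow> real" where
  "fdiff x k = x (k + 1) - x k"

definition fdiff2 :: "(int \<Rightarrow> real) \<Rightarrow> int \<Rightarrow> real" where
  "fdiff2 x = fdiff (fdiff x)"

text \<open>The space E: functions on Z[-1,N+2] (values outside are irrelevant) with the boundary conditions.\<close>
definition Espace :: "nat \<Rightarrow> (int \<Rightarrow> real) set" where
  "Espace N = {y. y (-1) = 0 \<and> y 0 = 0 \<and> y (int N + 1) = 0 \<and> y (int N + 2) = 0}"

definition Enorm :: "nat \<Rightarrow> (int \<Rightarrow> real) \<Rightarrow> real" where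
  "Enorm N y = sqrt (\<Sum>k=1..int N. (y k)^2)"

text \<open>Primitive F(k,s) = int_0^s f(k,t) dt (oriented interval integral).\<close>
definition Fprim :: "(int \<Rightarrow> real \<Rightarrow> real) \<Rightarrow> int \<Rightarrow> real \<Rightarrow> real" where
  "Fprim f k s = (LBINT t=0..s. f k t)"

definition Jfun :: "nat \<Rightarrow> (int \<Rightarrow> real) \<Rightarrow> (int \<Rightarrow> real) \<Rightarrow> (int \<Rightarrow> real \<Rightarrow> real)
    \<Rightarrow> (int \<Rightarrow> real) \<Rightarrow> real" where
  "Jfun N p q f y =
     (\<Sum>k=1..int N + 2. p k / 2 * (fdiff2 y (k - 2))^2)
   - (\<Sum>k=1..int N + 1. q k / 2 * (fdiff y (k - 1))^2)
   + (\<Sum>k=1..int N. Fprim f k (y k))"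

definition coercive_on_E :: "nat \<Rightarrow> ((int \<Rightarrow> real) \<Rightarrow> real) \<Rightarrow> bool" where
  "coercive_on_E N J \<longleftrightarrow>
     (\<forall>M. \<exists>R. \<forall>y \<in> Espace N. Enorm N y > R \<longrightarrow> J y > M)"

text \<open>Matrices as functions nat \<Rightarrow> nat \<Rightarrow> real (0-based indices).
  Column i corresponds to y(i+1); the matrix of a linear map on E is obtained
  by applying it to the unit functions.\<close>
definition unitfun :: "nat \<Rightarrow> int \<Rightarrow> real" where
  "unitfun i = (\<lambda>k. if k = int i + 1 then 1 else 0)"

text \<open>V: (N+1) x N, row j gives Delta y(j), j = 0..N.\<close>
definition Vmat :: "nat \<Rightarrow> nat \<Rightarrow> real" where
  "Vmat j i = fdiff (unitfun i) (int j)"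

text \<open>W: (N+2) x N, row j gives Delta^2 y(j-1), j = 0..N+1.\<close>
definition Wmat :: "nat \<Rightarrow> nat \<Rightarrow> real" where
  "Wmat j i = fdiff2 (unitfun i) (int j - 1)"

definition gram :: "nat \<Rightarrow> (nat \<Rightarrow> nat \<Rightarrow> real) \<Rightarrow> nat \<Rightarrow> nat \<Rightarrow> real" where
  "gram m A i j = (\<Sum>r<m. A r i * A r j)"

definition is_eigenvalue :: "nat \<Rightarrow> (nat \<Rightarrow> nat \<Rightarrow> real) \<Rightarrow> real \<Rightarrow> bool" where
  "is_eigenvalue n A \<mu> \<longleftrightarrow>
     (\<exists>v. (\<exists>i<n. v i \<noteq> 0) \<and> (\<forall>i<n. (\<Sum>j<n. A i j * v j) = \<mu> * v i))"

definition smallest_eigenvalue :: "nat \<Rightarrow> (nat \<Rightarrow> nat \<Rightarrow> real) \<Rightarrow> real" where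
  "smallest_eigenvalue n A = Min {\<mu>. is_eigenvalue n A \<mu>}"

definition lambda1 :: "nat \<Rightarrow> real" where
  "lambda1 N = smallest_eigenvalue N (gram (N + 1) Vmat)"

definition lambda2 :: "nat \<Rightarrow> real" where
  "lambda2 N = smallest_eigenvalue N (gram (N + 2) Wmat)"

definition pmin :: "nat \<Rightarrow> (int \<Rightarrow> real) \<Rightarrow> real" where
  "pmin N p = Min (p ` {1..int N + 2})"

definition qmax :: "nat \<Rightarrow> (int \<Rightarrow> real) \<Rightarrow> real" where
  "qmax N q = Max (q ` {1..int N + 1})"

definition eta' :: "nat \<Rightarrow> (int \<Rightarrow> real) \<Rightarrow> real" where
  "eta' N p = (if pmin N p \<ge> 0 then lambda2 N else 16)"

definition eta :: "nat \<Rightarrow> (int \<Rightarrow> real) \<Rightarrow> real" where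
  "eta N q = (if qmax N q < 0 then lambda1 N else 4)"

definition alpha1 :: "nat \<Rightarrow> (int \<Rightarrow> real) \<Rightarrow> (int \<Rightarrow> real) \<Rightarrow> real" where
  "alpha1 N p q = eta N q * qmax N q - eta' N p * pmin N p"

definition is_solution :: "nat \<Rightarrow> (int \<Rightarrow> real) \<Rightarrow> (int \<Rightarrow> real) \<Rightarrow> (int \<Rightarrow> real \<Rightarrow> real)
    \<Rightarrow> (int \<Rightarrow> real) \<Rightarrow> bool" where
  "is_solution N p q f y \<longleftrightarrow>
     y \<in> Espace N \<and>
     (\<forall>k \<in> {1..int N}.
        fdiff2 (\<lambda>j. p j * fdiff2 y (j - 2)) k + fdiff (\<lambda>j. q j * fdiff y (j - 1)) k
        + f k (y k) = 0)"

end

theory Submission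
  imports Defs "Jordan_Normal_Form.Spectral_Radius"
begin



lemma Fprim_deriv:
  assumes "continuous_on UNIV (f k)"
  shows "DERIV (Fprim f k) x :> f k x"
proof -
  let ?a = "-\<bar>x\<bar> - 1" and ?b = "\<bar>x\<bar> + 1"
  have "((\<lambda>u. LBINT y=ereal 0..u. f k y) has_vector_derivative (f k x)) (at x within {?a..?b})"
    by (rule interval_integral_FTC2[of ?a 0 ?b "f k" x]) (simp_all add: continuous_on_subset[OF assms])
  then have d: "((\<lambda>u. LBINT y=0..u. f k y) has_vector_derivative (f k x)) (at x within {?a..?b})"
    unfolding zero_ereal_def .
  have "x \<in> interior {?a..?b}" unfolding interior_atLeastAtMost_real by (simp add: abs_if)
  then have eq: "at x within {?a..?b} = at x" by (rule at_within_interior)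
  have "((\<lambda>u. LBINT y=0..u. f k y) has_vector_derivative (f k x)) (at x)"
    using d unfolding eq .
  then show ?thesis
    unfolding Fprim_def has_real_derivative_iff_has_vector_derivative by (simp add: fun_eq_iff)
qed

lemma Fprim_cont:
  assumes "continuous_on UNIV (f k)"
  shows "continuous_on UNIV (Fprim f k)"
  apply (rule continuous_at_imp_continuous_on, intro ballI)
  apply (rule DERIV_isCont, rule Fprim_deriv, rule assms)
  done

lemma quad_lower:
  fixes G g :: "real \<Rightarrow> real"
  assumes der: "\<And>x. DERIV G x :> g x"
    and S: "S > 0" and pos: "\<And>s. s \<ge> S \<Longrightarrow> g s \<ge> c * s"
    and neg: "\<And>s. s \<ge> S \<Longrightarrow> g (-s) \<le> - (c * s)"
  shows "\<exists>D. \<forall>s. G s \<ge> c * s^2 / 2 - D"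
proof -
  define h where "h s = G s - c * s^2 / 2" for s
  define h2 where "h2 s = G (-s) - c * s^2 / 2" for s
  have hd: "DERIV h x :> g x - c * x" for x
    unfolding h_def by (rule derivative_eq_intros der refl | simp)+
  have h2d: "DERIV h2 x :> - g (-x) - c * x" for x
  proof -
    have "DERIV (\<lambda>z. G (-z)) x :> - g (-x)" using DERIV_mirror[where f=G and x=x and y="g (-x)"] der by simp
    then show ?thesis unfolding h2_def by (rule DERIV_diff[THEN DERIV_cong]) (auto intro!: derivative_eq_intros)
  qed
  have 1: "h s \<ge> h S" if "s \<ge> S" for s
    apply (rule DERIV_nonneg_imp_nondecreasing[OF that])
    subgoal for x using hd[of x] pos[of x] by auto
    done
  have 2: "h2 s \<ge> h2 S" if "s \<ge> S" for s
    apply (rule DERIV_nonneg_imp_nondecreasing[OF that])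
    subgoal for x using h2d[of x] neg[of x] by auto
    done
  have ch: "continuous_on {-S..S} h"
    by (rule continuous_at_imp_continuous_on, intro ballI, rule DERIV_isCont, rule hd)
  obtain z where z: "z \<in> {-S..S}" "\<And>y. y \<in> {-S..S} \<Longrightarrow> h z \<le> h y"
  proof -
    have "{-S..S} \<noteq> {}" using S by auto
    from continuous_attains_inf[OF compact_Icc this ch] show ?thesis using that by blast
  qed
  define D where "D = - min (h z) (min (h S) (h2 S))"
  have "G s \<ge> c * s^2 / 2 - D" for s
  proof -
    have "h s \<ge> - D"
    proof (cases "s \<ge> S")
      case True then show ?thesis using 1[OF True] by (simp add: D_def)
    next
      case False
      show ?thesis
      proof (cases "s \<le> -S")
        case True
        have "h s = h2 (-s)" by (simp add: h_def h2_def)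
        then show ?thesis using 2[of "-s"] True by (simp add: D_def)
      next
        case False
        then show ?thesis using z(2)[of s] \<open>\<not> s \<ge> S\<close> by (simp add: D_def)
      qed
    qed
    then show ?thesis by (simp add: h_def)
  qed
  then show ?thesis by blast
qed



lemma sum_int_nat: "(\<Sum>k=1..int M. g k) = (\<Sum>r<M. g (int r + 1))"
proof -
  have e: "{1..int M} = (\<lambda>r. int r + 1) ` {..<M}"
  proof
    show "{1..int M} \<subseteq> (\<lambda>r. int r + 1) ` {..<M}"
    proof
      fix x assume "x \<in> {1..int M}"
      then have "x = int (nat (x - 1)) + 1" "nat (x - 1) < M" by auto
      then show "x \<in> (\<lambda>r. int r + 1) ` {..<M}" by blast
    qed
  qed auto
  have "inj_on (\<lambda>r. int r + 1) {..<M}" by (auto simp: inj_on_def)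
  then show ?thesis by (simp add: e sum.reindex)
qed



lemma quadform:
  "(\<Sum>i<n. v i * (\<Sum>j<n. gram m M i j * v j)) = (\<Sum>r<m. (\<Sum>i<n. M r i * v i)^2)"
proof -
  have "(\<Sum>i<n. v i * (\<Sum>j<n. gram m M i j * v j)) = (\<Sum>i<n. \<Sum>j<n. \<Sum>r<m. (M r i * v i) * (M r j * v j))"
    by (simp add: gram_def sum_distrib_left sum_distrib_right mult_ac)
  also have "\<dots> = (\<Sum>i<n. \<Sum>r<m. \<Sum>j<n. (M r i * v i) * (M r j * v j))"
    by (rule sum.cong[OF refl], rule sum.swap)
  also have "\<dots> = (\<Sum>r<m. \<Sum>i<n. \<Sum>j<n. (M r i * v i) * (M r j * v j))"
    by (rule sum.swap)
  also have "\<dots> = (\<Sum>r<m. (\<Sum>i<n. M r i * v i)^2)"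
    by (simp add: power2_eq_square sum_product)
  finally show ?thesis .
qed

lemma DERIV_sq_sum:
  "DERIV (\<lambda>t. (\<Sum>r<m. (a r + t * c r)^2)) 0 :> (\<Sum>r<m. 2 * a r * (c r::real))"
  by (auto intro!: derivative_eq_intros simp: mult_ac)

lemma sum_pert:
  fixes k n :: nat
  assumes "k < n"
  shows "(\<Sum>i<n. M i * (u i + t * (if i = k then 1 else 0))) = (\<Sum>i<n. M i * u i) + t * (M k::real)"
proof -
  have "(\<Sum>i<n. M i * (u i + t * (if i = k then 1 else 0))) = (\<Sum>i<n. M i * u i) + (\<Sum>i<n. if i = k then t * M k else 0)"
    unfolding sum.distrib[symmetric] by (rule sum.cong) (auto simp: algebra_simps)
  also have "(\<Sum>i<n. if i = k then t * M k else 0) = t * M k" using assms by simp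
  finally show ?thesis .
qed

lemma compact_box:
  fixes S :: "'i \<Rightarrow> real set"
  assumes "\<And>i. compact (S i)"
  shows "compact (Pi\<^sub>E UNIV S)"
proof -
  have "compactin (product_topology (\<lambda>i. euclidean) UNIV) (Pi\<^sub>E UNIV S)"
    using assms by (auto simp: compactin_PiE)
  then show ?thesis by (simp add: euclidean_product_topology)
qed

lemma cont_Q: "continuous_on UNIV (\<lambda>v::nat\<Rightarrow>real. (\<Sum>r<m. (\<Sum>i<n. M r i * v i)^2))"
  by (intro continuous_intros continuous_on_product_coordinates)

lemma cont_nn: "continuous_on UNIV (\<lambda>v::nat\<Rightarrow>real. (\<Sum>i<n. v i^2))"
  by (intro continuous_intros continuous_on_product_coordinates)


lemma fin_eig: "finite {\<mu>. is_eigenvalue n A \<mu>}"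
proof -
  define M where "M = Matrix.mat n n (\<lambda>(i,j). A i j)"
  have M: "M \<in> carrier_mat n n" by (simp add: M_def)
  have "{\<mu>. is_eigenvalue n A \<mu>} \<subseteq> spectrum M"
  proof
    fix \<mu> assume "\<mu> \<in> {\<mu>. is_eigenvalue n A \<mu>}"
    then obtain v where v: "\<exists>i<n. v i \<noteq> 0" "\<forall>i<n. (\<Sum>j<n. A i j * v j) = \<mu> * v i"
      unfolding is_eigenvalue_def by auto
    define w where "w = Matrix.vec n v"
    have "eigenvector M w \<mu>"
      unfolding eigenvector_def
    proof (intro conjI)
      show "w \<in> carrier_vec (dim_row M)" using M by (simp add: w_def)
      show "w \<noteq> 0\<^sub>v (dim_row M)" using v(1) M
        by (auto simp: w_def) (metis index_vec index_zero_vec(1))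
      show "M *\<^sub>v w = \<mu> \<cdot>\<^sub>v w"
        by (rule eq_vecI) (use v(2) in \<open>auto simp: M_def w_def scalar_prod_def atLeast0LessThan\<close>)
    qed
    then show "\<mu> \<in> spectrum M" unfolding spectrum_def eigenvalue_def by auto
  qed
  then show ?thesis using card_finite_spectrum[OF M] finite_subset by blast
qed

lemma eig_bound:
  fixes M :: "nat \<Rightarrow> nat \<Rightarrow> real" and v :: "nat \<Rightarrow> real"
  assumes n: "n \<ge> 1"
  shows "smallest_eigenvalue n (gram m M) * (\<Sum>i<n. v i^2) \<le> (\<Sum>r<m. (\<Sum>i<n. M r i * v i)^2)"
proof -
  define Q where "Q w = (\<Sum>r<m. (\<Sum>i<n. M r i * w i)^2)" for w :: "nat \<Rightarrow> real"
  define nn where "nn w = (\<Sum>i<n. w i^2)" for w :: "nat \<Rightarrow> real"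
  define K where "K = Pi\<^sub>E UNIV (\<lambda>i::nat. if i < n then {-1..1::real} else {0})"
  define Sph where "Sph = K \<inter> {w. nn w = 1}"
  have "compact K" unfolding K_def by (rule compact_box) auto
  moreover have "closed {w. nn w = 1}" unfolding nn_def by (rule closed_Collect_eq[OF cont_nn continuous_on_const])
  ultimately have cS: "compact Sph" unfolding Sph_def by (rule compact_Int_closed)
  define e0 where "e0 = (\<lambda>i::nat. if i = 0 then 1 else (0::real))"
  have "nn e0 = (\<Sum>i<n. if i = 0 then 1 else 0)" unfolding nn_def e0_def by (rule sum.cong) auto
  also have "\<dots> = 1" using n by simp
  finally have "e0 \<in> Sph" using n by (auto simp: Sph_def K_def e0_def)
  then have ne: "Sph \<noteq> {}" by auto
  have cQ: "continuous_on Sph Q" unfolding Q_def by (rule continuous_on_subset[OF cont_Q]) simp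
  obtain u where u: "u \<in> Sph" "\<And>w. w \<in> Sph \<Longrightarrow> Q u \<le> Q w"
    using continuous_attains_inf[OF cS ne cQ] by blast
  define m0 where "m0 = Q u"
  have nnu: "nn u = 1" using u(1) by (simp add: Sph_def)
  have nn0: "nn w \<ge> 0" for w unfolding nn_def by (simp add: sum_nonneg)
  have Qge0: "Q w \<ge> 0" for w unfolding Q_def by (simp add: sum_nonneg)
  have A: "m0 * nn w \<le> Q w" for w
  proof (cases "nn w = 0")
    case True then show ?thesis using Qge0 by simp
  next
    case False
    then have pos: "nn w > 0" using nn0[of w] by linarith
    define z where "z i = (if i < n then w i / sqrt (nn w) else 0)" for i
    have "nn z = (\<Sum>i<n. w i^2 / nn w)" unfolding nn_def z_def
      by (rule sum.cong) (use nn0[of w] in \<open>auto simp: power_divide nn_def\<close>)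
    also have "\<dots> = 1" using pos by (simp add: sum_divide_distrib[symmetric] nn_def)
    finally have nnz: "nn z = 1" .
    have "z \<in> K"
    proof -
      have zb: "z i \<in> {-1..1}" if "i < n" for i
      proof -
        have "w i^2 \<le> nn w" unfolding nn_def by (rule member_le_sum) (use that in auto)
        then have "(z i)^2 \<le> 1" using that pos by (simp add: z_def power_divide)
        then have "\<bar>z i\<bar> \<le> 1" by (simp add: abs_square_le_1)
        then show ?thesis by (simp add: abs_le_iff)
      qed
      have "z i \<in> (if i < n then {-1..1} else {0})" for i
        using zb[of i] by (cases "i < n") (simp_all add: z_def)
      then show ?thesis by (simp add: K_def PiE_iff)
    qed
    then have "z \<in> Sph" using nnz by (simp add: Sph_def)
    have "Q z = (\<Sum>r<m. ((\<Sum>i<n. M r i * w i) / sqrt (nn w))^2)" unfolding Q_def z_def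
      by (simp add: sum_divide_distrib)
    also have "\<dots> = Q w / nn w" using pos
      by (simp add: Q_def power_divide sum_divide_distrib[symmetric])
    finally have "m0 \<le> Q w / nn w" using u(2)[OF \<open>z \<in> Sph\<close>] by (simp add: m0_def)
    then show ?thesis using pos by (simp add: pos_le_divide_eq)
  qed
  have B: "(\<Sum>j<n. gram m M k j * u j) = m0 * u k" if k: "k < n" for k
  proof -
    define a where "a r = (\<Sum>i<n. M r i * u i)" for r
    define d where "d i = (if i = k then 1 else (0::real))" for i
    define \<phi> where "\<phi> t = Q (\<lambda>i. u i + t * d i) - m0 * nn (\<lambda>i. u i + t * d i)" for t
    have \<phi>eq: "\<phi> = (\<lambda>t. (\<Sum>r<m. (a r + t * M r k)^2) - m0 * (\<Sum>i<n. (u i + t * d i)^2))"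
      using sum_pert[OF k] by (simp add: fun_eq_iff \<phi>_def Q_def nn_def a_def d_def)
    have dd: "(\<Sum>i<n. 2 * u i * d i) = 2 * u k"
    proof -
      have "(\<Sum>i<n. 2 * u i * d i) = (\<Sum>i<n. if i = k then 2 * u k else 0)"
        by (rule sum.cong) (auto simp: d_def)
      then show ?thesis using k by simp
    qed
    have der: "DERIV \<phi> 0 :> (\<Sum>r<m. 2 * a r * M r k) - m0 * (2 * u k)"
      unfolding \<phi>eq dd[symmetric]
      by (intro DERIV_diff DERIV_cmult DERIV_sq_sum)
    have "\<phi> 0 \<le> \<phi> t" for t
    proof -
      have "\<phi> 0 = 0" using nnu by (simp add: \<phi>_def m0_def)
      moreover have "\<phi> t \<ge> 0" using A[of "\<lambda>i. u i + t * d i"] by (simp add: \<phi>_def)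
      ultimately show ?thesis by simp
    qed
    then have "(\<Sum>r<m. 2 * a r * M r k) - m0 * (2 * u k) = 0"
      by (intro DERIV_local_min[OF der, of 1]) auto
    then have 1: "(\<Sum>r<m. a r * M r k) = m0 * u k"
      by (simp add: sum_distrib_left[symmetric] mult.assoc)
    have "(\<Sum>j<n. gram m M k j * u j) = (\<Sum>j<n. \<Sum>r<m. M r k * (M r j * u j))"
      by (simp add: gram_def sum_distrib_right sum_distrib_left mult_ac)
    also have "\<dots> = (\<Sum>r<m. \<Sum>j<n. M r k * (M r j * u j))" by (rule sum.swap)
    also have "\<dots> = (\<Sum>r<m. a r * M r k)" by (simp add: a_def sum_distrib_left mult_ac)
    finally show ?thesis using 1 by simp
  qed
  have eig: "is_eigenvalue n (gram m M) m0"
    unfolding is_eigenvalue_def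
  proof (rule exI[of _ u], intro conjI)
    show "\<exists>i<n. u i \<noteq> 0"
    proof (rule ccontr)
      assume "\<not> (\<exists>i<n. u i \<noteq> 0)"
      then have "nn u = 0" by (simp add: nn_def)
      then show False using nnu by simp
    qed
    show "\<forall>i<n. (\<Sum>j<n. gram m M i j * u j) = m0 * u i" using B by blast
  qed
  have ge: "m0 \<le> \<mu>" if ev: "is_eigenvalue n (gram m M) \<mu>" for \<mu>
  proof -
    obtain w where w: "\<exists>i<n. w i \<noteq> 0" "\<forall>i<n. (\<Sum>j<n. gram m M i j * w j) = \<mu> * w i"
      using ev unfolding is_eigenvalue_def by blast
    obtain i where i: "i < n" "w i \<noteq> 0" using w(1) by auto
    have "w i^2 \<le> nn w" unfolding nn_def by (rule member_le_sum) (use i in auto)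
    moreover have "w i^2 > 0" using i by simp
    ultimately have pos: "nn w > 0" by linarith
    have "Q w = (\<Sum>i<n. w i * (\<Sum>j<n. gram m M i j * w j))" unfolding Q_def by (rule quadform[symmetric])
    also have "\<dots> = (\<Sum>i<n. \<mu> * w i^2)" by (rule sum.cong) (use w(2) in \<open>auto simp: power2_eq_square\<close>)
    also have "\<dots> = \<mu> * nn w" by (simp add: nn_def sum_distrib_left)
    finally have "m0 * nn w \<le> \<mu> * nn w" using A[of w] by simp
    then show ?thesis using pos by simp
  qed
  have "smallest_eigenvalue n (gram m M) = m0" unfolding smallest_eigenvalue_def
    by (rule Min_eqI) (use fin_eig eig ge in auto)
  then show ?thesis using A[of v] by (simp add: Q_def nn_def)
qed



lemma espace_zero:
  assumes "y \<in> Espace N" "-1 \<le> k" "k \<le> int N + 2" "\<not> (1 \<le> k \<and> k \<le> int N)"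
  shows "y k = 0"
proof -
  have "k = -1 \<or> k = 0 \<or> k = int N + 1 \<or> k = int N + 2" using assms(2-4) by arith
  then show ?thesis using assms(1) by (auto simp: Espace_def)
qed

lemma shift_sum_sq:
  assumes y: "y \<in> Espace N" and j: "0 \<le> j" "j \<le> e" "e \<le> 2"
  shows "(\<Sum>k=1..int N + e. (y (k - j))^2) = (\<Sum>k=1..int N. (y k)^2)"
proof -
  have "(\<Sum>k=1..int N + e. (y (k - j))^2) = (\<Sum>k \<in> (\<lambda>t. t - j) ` {1..int N + e}. (y k)^2)"
    by (subst sum.reindex) (auto simp: inj_on_def)
  also have "(\<lambda>t. t - j) ` {1..int N + e} = {1 - j..int N + e - j}" by simp
  also have "(\<Sum>k\<in>{1-j..int N+e-j}. (y k)^2) = (\<Sum>k=1..int N. (y k)^2)"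
  proof (rule sum.mono_neutral_right)
    show "{1..int N} \<subseteq> {1 - j..int N + e - j}" using j by auto
    show "\<forall>k\<in>{1 - j..int N + e - j} - {1..int N}. (y k)^2 = 0"
      using espace_zero[OF y] j by auto
  qed auto
  finally show ?thesis .
qed

lemma expand:
  assumes y: "y \<in> Espace N" and k: "-1 \<le> k" "k \<le> int N + 2"
  shows "(\<Sum>i<N. y (int i + 1) * unitfun i k) = y k"
proof (cases "1 \<le> k \<and> k \<le> int N")
  case True
  have "(\<Sum>i<N. y (int i + 1) * unitfun i k) = (\<Sum>i<N. if i = nat (k - 1) then y k else 0)"
    by (rule sum.cong) (use True in \<open>auto simp: unitfun_def\<close>)
  also have "\<dots> = y k" using True by (simp add: nat_less_iff)
  finally show ?thesis .
next
  case False
  have "(\<Sum>i<N. y (int i + 1) * unitfun i k) = (\<Sum>i<N. 0)"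
    by (rule sum.cong) (use False in \<open>auto simp: unitfun_def\<close>)
  then show ?thesis using espace_zero[OF y k False] by simp
qed

lemma f2_eq: "fdiff2 x j = x (j+2) - 2 * x (j+1) + x j"
  by (simp add: fdiff2_def fdiff_def algebra_simps)

lemma W_rel:
  assumes y: "y \<in> Espace N" and r: "r < N + 2"
  shows "(\<Sum>i<N. Wmat r i * y (int i + 1)) = fdiff2 y (int r - 1)"
proof -
  define j where "j = int r - 1"
  have b: "-1 \<le> j" "j + 2 \<le> int N + 2" using r by (auto simp: j_def)
  have "fdiff2 y j = (\<Sum>i<N. y (int i + 1) * unitfun i (j+2)) - 2 * (\<Sum>i<N. y (int i + 1) * unitfun i (j+1))
     + (\<Sum>i<N. y (int i + 1) * unitfun i j)"
    using b by (simp add: f2_eq expand[OF y])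
  also have "\<dots> = (\<Sum>i<N. Wmat r i * y (int i + 1))"
    by (simp add: Wmat_def f2_eq j_def sum_distrib_left sum.distrib sum_subtractf algebra_simps)
  finally show ?thesis by (simp add: j_def)
qed

lemma V_rel:
  assumes y: "y \<in> Espace N" and r: "r < N + 1"
  shows "(\<Sum>i<N. Vmat r i * y (int i + 1)) = fdiff y (int r)"
proof -
  have b: "-1 \<le> int r" "int r + 1 \<le> int N + 2" using r by auto
  have "fdiff y (int r) = (\<Sum>i<N. y (int i + 1) * unitfun i (int r+1)) - (\<Sum>i<N. y (int i + 1) * unitfun i (int r))"
    using b by (simp add: fdiff_def expand[OF y])
  also have "\<dots> = (\<Sum>i<N. Vmat r i * y (int i + 1))"
    by (simp add: Vmat_def fdiff_def sum_subtractf algebra_simps)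
  finally show ?thesis by simp
qed

lemma W_ge:
  assumes y: "y \<in> Espace N" and N: "N \<ge> 1"
  shows "lambda2 N * (\<Sum>k=1..int N. (y k)^2) \<le> (\<Sum>k=1..int N + 2. (fdiff2 y (k-2))^2)"
proof -
  have 1: "(\<Sum>k=1..int N. (y k)^2) = (\<Sum>i<N. (y (int i + 1))^2)" by (rule sum_int_nat)
  have "(\<Sum>k=1..int N + 2. (fdiff2 y (k-2))^2) = (\<Sum>k=1..int (N + 2). (fdiff2 y (k-2))^2)" by (simp add: add.commute)
  also have "\<dots> = (\<Sum>r<N+2. (fdiff2 y (int r - 1))^2)" by (subst sum_int_nat) (simp add: algebra_simps)
  also have "\<dots> = (\<Sum>r<N+2. (\<Sum>i<N. Wmat r i * y (int i + 1))^2)"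
    by (rule sum.cong) (auto simp: W_rel[OF y])
  finally have 2: "(\<Sum>k=1..int N + 2. (fdiff2 y (k-2))^2) = (\<Sum>r<N+2. (\<Sum>i<N. Wmat r i * y (int i + 1))^2)" .
  show ?thesis unfolding 1 2 lambda2_def by (rule eig_bound[OF N])
qed

lemma V_ge:
  assumes y: "y \<in> Espace N" and N: "N \<ge> 1"
  shows "lambda1 N * (\<Sum>k=1..int N. (y k)^2) \<le> (\<Sum>k=1..int N + 1. (fdiff y (k-1))^2)"
proof -
  have 1: "(\<Sum>k=1..int N. (y k)^2) = (\<Sum>i<N. (y (int i + 1))^2)" by (rule sum_int_nat)
  have "(\<Sum>k=1..int N + 1. (fdiff y (k-1))^2) = (\<Sum>k=1..int (N + 1). (fdiff y (k-1))^2)" by (simp add: add.commute)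
  also have "\<dots> = (\<Sum>r<N+1. (fdiff y (int r))^2)" by (subst sum_int_nat) simp
  also have "\<dots> = (\<Sum>r<N+1. (\<Sum>i<N. Vmat r i * y (int i + 1))^2)"
    by (rule sum.cong) (auto simp: V_rel[OF y])
  finally have 2: "(\<Sum>k=1..int N + 1. (fdiff y (k-1))^2) = (\<Sum>r<N+1. (\<Sum>i<N. Vmat r i * y (int i + 1))^2)" .
  show ?thesis unfolding 1 2 lambda1_def by (rule eig_bound[OF N])
qed

lemma sq3: "((a::real) - 2 * b + c)^2 \<le> 4 * (a^2 + 2 * b^2 + c^2)"
proof -
  have "4 * (a^2 + 2 * b^2 + c^2) - (a - 2 * b + c)^2 = 2*(a+b)^2 + 2*(b+c)^2 + (a-c)^2"
    by (simp add: power2_eq_square algebra_simps)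
  moreover have "2*(a+b)^2 + 2*(b+c)^2 + (a-c)^2 \<ge> 0" by simp
  ultimately show ?thesis by linarith
qed

lemma sq2: "((a::real) - b)^2 \<le> 2 * (a^2 + b^2)"
proof -
  have "2 * (a^2 + b^2) - (a - b)^2 = (a+b)^2" by (simp add: power2_eq_square algebra_simps)
  then show ?thesis by (metis diff_ge_0_iff_ge zero_le_power2)
qed

lemma W_le:
  assumes y: "y \<in> Espace N"
  shows "(\<Sum>k=1..int N + 2. (fdiff2 y (k-2))^2) \<le> 16 * (\<Sum>k=1..int N. (y k)^2)"
proof -
  have "(\<Sum>k=1..int N + 2. (fdiff2 y (k-2))^2) \<le> (\<Sum>k=1..int N + 2. 4 * ((y (k-0))^2 + 2 * (y (k-1))^2 + (y (k-2))^2))"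
  proof (rule sum_mono)
    fix k
    have "fdiff2 y (k-2) = y k - 2 * y (k - 1) + y (k-2)" by (simp add: f2_eq algebra_simps)
    then show "(fdiff2 y (k-2))^2 \<le> 4 * ((y (k-0))^2 + 2 * (y (k-1))^2 + (y (k-2))^2)" using sq3 by simp
  qed
  also have "\<dots> = 4 * ((\<Sum>k=1..int N + 2. (y (k-0))^2) + 2 * (\<Sum>k=1..int N + 2. (y (k-1))^2) + (\<Sum>k=1..int N + 2. (y (k-2))^2))"
    by (simp add: sum.distrib sum_distrib_left)
  also have "\<dots> = 16 * (\<Sum>k=1..int N. (y k)^2)"
    using shift_sum_sq[OF y, of 0 2] shift_sum_sq[OF y, of 1 2] shift_sum_sq[OF y, of 2 2] by simp
  finally show ?thesis .
qed

lemma V_le: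
  assumes y: "y \<in> Espace N"
  shows "(\<Sum>k=1..int N + 1. (fdiff y (k-1))^2) \<le> 4 * (\<Sum>k=1..int N. (y k)^2)"
proof -
  have "(\<Sum>k=1..int N + 1. (fdiff y (k-1))^2) \<le> (\<Sum>k=1..int N + 1. 2 * ((y (k-0))^2 + (y (k-1))^2))"
  proof (rule sum_mono)
    fix k
    have "fdiff y (k-1) = y k - y (k - 1)" by (simp add: fdiff_def)
    then show "(fdiff y (k-1))^2 \<le> 2 * ((y (k-0))^2 + (y (k-1))^2)" using sq2 by simp
  qed
  also have "\<dots> = 2 * ((\<Sum>k=1..int N + 1. (y (k-0))^2) + (\<Sum>k=1..int N + 1. (y (k-1))^2))"
    by (simp add: sum.distrib sum_distrib_left)
  also have "\<dots> = 4 * (\<Sum>k=1..int N. (y k)^2)"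
    using shift_sum_sq[OF y, of 0 1] shift_sum_sq[OF y, of 1 1] by simp
  finally show ?thesis .
qed



lemma pmin_le: "k \<in> {1..int N + 2} \<Longrightarrow> pmin N p \<le> p k"
  unfolding pmin_def by (rule Min_le) auto

lemma qmax_ge: "k \<in> {1..int N + 1} \<Longrightarrow> q k \<le> qmax N q"
  unfolding qmax_def by (rule Max_ge) auto

lemma quad_bound:
  assumes y: "y \<in> Espace N" and N: "N \<ge> 1"
  shows "(\<Sum>k=1..int N + 2. p k / 2 * (fdiff2 y (k - 2))^2)
   - (\<Sum>k=1..int N + 1. q k / 2 * (fdiff y (k - 1))^2) \<ge> - alpha1 N p q / 2 * (\<Sum>k=1..int N. (y k)^2)"
proof -
  define s where "s = (\<Sum>k=1..int N. (y k)^2)"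
  define Ws where "Ws = (\<Sum>k=1..int N + 2. (fdiff2 y (k-2))^2)"
  define Vs where "Vs = (\<Sum>k=1..int N + 1. (fdiff y (k-1))^2)"
  have P: "(\<Sum>k=1..int N + 2. p k / 2 * (fdiff2 y (k - 2))^2) \<ge> pmin N p * Ws / 2"
  proof -
    have "(\<Sum>k=1..int N + 2. p k / 2 * (fdiff2 y (k - 2))^2) \<ge> (\<Sum>k=1..int N + 2. pmin N p / 2 * (fdiff2 y (k - 2))^2)"
      by (rule sum_mono) (use pmin_le in \<open>auto intro!: mult_right_mono\<close>)
    moreover have "(\<Sum>k=1..int N + 2. pmin N p / 2 * (fdiff2 y (k - 2))^2) = pmin N p / 2 * Ws"
      unfolding Ws_def by (rule sum_distrib_left[symmetric])
    ultimately show ?thesis by simp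
  qed
  have Q: "(\<Sum>k=1..int N + 1. q k / 2 * (fdiff y (k - 1))^2) \<le> qmax N q * Vs / 2"
  proof -
    have "(\<Sum>k=1..int N + 1. q k / 2 * (fdiff y (k - 1))^2) \<le> (\<Sum>k=1..int N + 1. qmax N q / 2 * (fdiff y (k - 1))^2)"
      by (rule sum_mono) (use qmax_ge in \<open>auto intro!: mult_right_mono\<close>)
    moreover have "(\<Sum>k=1..int N + 1. qmax N q / 2 * (fdiff y (k - 1))^2) = qmax N q / 2 * Vs"
      unfolding Vs_def by (rule sum_distrib_left[symmetric])
    ultimately show ?thesis by simp
  qed
  have P2: "pmin N p * Ws \<ge> eta' N p * pmin N p * s"
  proof (cases "pmin N p \<ge> 0")
    case True
    have "lambda2 N * s \<le> Ws" using W_ge[OF y N] by (simp add: s_def Ws_def)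
    then have "pmin N p * (lambda2 N * s) \<le> pmin N p * Ws" using True by (rule mult_left_mono)
    then show ?thesis using True by (simp add: eta'_def mult_ac)
  next
    case False
    have "Ws \<le> 16 * s" using W_le[OF y] by (simp add: s_def Ws_def)
    then have "pmin N p * (16 * s) \<le> pmin N p * Ws" using False by (intro mult_left_mono_neg) auto
    then show ?thesis using False by (simp add: eta'_def mult_ac)
  qed
  have Q2: "qmax N q * Vs \<le> eta N q * qmax N q * s"
  proof (cases "qmax N q < 0")
    case True
    have "lambda1 N * s \<le> Vs" using V_ge[OF y N] by (simp add: s_def Vs_def)
    then have "qmax N q * Vs \<le> qmax N q * (lambda1 N * s)" using True by (intro mult_left_mono_neg) auto
    then show ?thesis using True by (simp add: eta_def mult_ac)
  next
    case False
    have "Vs \<le> 4 * s" using V_le[OF y] by (simp add: s_def Vs_def)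
    then have "qmax N q * Vs \<le> qmax N q * (4 * s)" using False by (intro mult_left_mono) auto
    then show ?thesis using False by (simp add: eta_def mult_ac)
  qed
  have e: "- alpha1 N p q / 2 * s = (eta' N p * pmin N p * s - eta N q * qmax N q * s) / 2"
    by (simp add: alpha1_def algebra_simps)
  have lin: "(X - Y)/2 \<le> S1 - S2" if "X \<le> a" "a/2 \<le> S1" "S2 \<le> b/2" "b \<le> Y" for X Y a b S1 S2 :: real
    using that by argo
  show ?thesis unfolding s_def[symmetric] e by (rule lin[OF P2 P Q Q2])
qed

lemma J_lower:
  assumes y: "y \<in> Espace N" and N: "N \<ge> 1"
    and F: "\<And>k t. k \<in> {1..int N} \<Longrightarrow> Fprim f k t \<ge> c * t^2 / 2 - D"
  shows "Jfun N p q f y \<ge> (c - alpha1 N p q) / 2 * (\<Sum>k=1..int N. (y k)^2) - real N * D"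
proof -
  have "(\<Sum>k=1..int N. Fprim f k (y k)) \<ge> (\<Sum>k=1..int N. c * (y k)^2 / 2 - D)"
    by (rule sum_mono) (rule F)
  also have "(\<Sum>k=1..int N. c * (y k)^2 / 2 - D) = c / 2 * (\<Sum>k=1..int N. (y k)^2) - real N * D"
    by (simp add: sum_subtractf sum_distrib_left sum_divide_distrib)
  finally have "(\<Sum>k=1..int N. Fprim f k (y k)) \<ge> c / 2 * (\<Sum>k=1..int N. (y k)^2) - real N * D" .
  moreover have "(c - alpha1 N p q) / 2 * (\<Sum>k=1..int N. (y k)^2) = c / 2 * (\<Sum>k=1..int N. (y k)^2) + (- alpha1 N p q / 2 * (\<Sum>k=1..int N. (y k)^2))"
    by (simp add: diff_divide_distrib left_diff_distrib)
  ultimately show ?thesis using quad_bound[OF y N, of p q] unfolding Jfun_def by linarith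
qed



lemma J_local:
  assumes "\<And>k. -1 \<le> k \<Longrightarrow> k \<le> int N + 2 \<Longrightarrow> y k = z k"
  shows "Jfun N p q f y = Jfun N p q f z"
proof -
  have 1: "(\<Sum>k=1..int N + 2. p k / 2 * (fdiff2 y (k - 2))^2) = (\<Sum>k=1..int N + 2. p k / 2 * (fdiff2 z (k - 2))^2)"
    by (rule sum.cong) (auto simp: f2_eq assms)
  have 2: "(\<Sum>k=1..int N + 1. q k / 2 * (fdiff y (k - 1))^2) = (\<Sum>k=1..int N + 1. q k / 2 * (fdiff z (k - 1))^2)"
    by (rule sum.cong) (auto simp: fdiff_def assms)
  have 3: "(\<Sum>k=1..int N. Fprim f k (y k)) = (\<Sum>k=1..int N. Fprim f k (z k))"
    by (rule sum.cong) (auto simp: assms)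
  show ?thesis unfolding Jfun_def 1 2 3 ..
qed

lemma J_cont:
  assumes cont: "\<forall>k\<in>{1..int N}. continuous_on UNIV (f k)"
  shows "continuous_on UNIV (Jfun N p q f)"
proof -
  have c: "continuous_on UNIV (\<lambda>y::int\<Rightarrow>real. Fprim f k (y k))" if "k \<in> {1..int N}" for k
    by (rule continuous_on_compose2[OF Fprim_cont[of f k] continuous_on_product_coordinates]) (use cont that in auto)
  show ?thesis
    unfolding Jfun_def[abs_def] fdiff2_def fdiff_def
    by (intro continuous_intros continuous_on_product_coordinates c) auto
qed


lemma EL:
  assumes cont: "\<forall>k\<in>{1..int N}. continuous_on UNIV (f k)"
    and y0: "y0 \<in> Espace N" and mn: "\<And>y. y \<in> Espace N \<Longrightarrow> Jfun N p q f y0 \<le> Jfun N p q f y"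
    and i: "i \<in> {1..int N}"
  shows "fdiff2 (\<lambda>j. p j * fdiff2 y0 (j - 2)) i + fdiff (\<lambda>j. q j * fdiff y0 (j - 1)) i + f i (y0 i) = 0"
proof -
  define e where "e k = (if k = i then 1 else (0::real))" for k
  define yt where "yt t = (\<lambda>k. y0 k + t * e k)" for t
  have ytE: "yt t \<in> Espace N" for t using y0 i by (auto simp: Espace_def yt_def e_def)
  have lin2: "fdiff2 (yt t) j = fdiff2 y0 j + t * fdiff2 e j" for t j
    by (simp add: f2_eq yt_def algebra_simps)
  have lin1: "fdiff (yt t) j = fdiff y0 j + t * fdiff e j" for t j
    by (simp add: fdiff_def yt_def algebra_simps)
  define P where "P k = p k * fdiff2 y0 (k - 2)" for k
  define Qf where "Qf k = q k * fdiff y0 (k - 1)" for k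
  define g where "g t = Jfun N p q f (yt t)" for t
  have geq: "g = (\<lambda>t. (\<Sum>k=1..int N + 2. p k / 2 * (fdiff2 y0 (k - 2) + t * fdiff2 e (k - 2))^2)
     - (\<Sum>k=1..int N + 1. q k / 2 * (fdiff y0 (k - 1) + t * fdiff e (k - 1))^2)
     + (\<Sum>k=1..int N. Fprim f k (y0 k + t * e k)))"
    by (simp add: fun_eq_iff g_def Jfun_def lin1 lin2) (simp add: yt_def)
  have dF: "DERIV (\<lambda>t. Fprim f k (y0 k + t * e k)) 0 :> f k (y0 k) * e k" if k: "k \<in> {1..int N}" for k
  proof -
    have d1: "DERIV (Fprim f k) ((\<lambda>t. y0 k + t * e k) 0) :> f k (y0 k)"
      using Fprim_deriv[of f k "y0 k"] cont k by simp
    have d2: "DERIV (\<lambda>t. y0 k + t * e k) 0 :> e k" by (auto intro!: derivative_eq_intros)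
    show ?thesis using DERIV_chain2[where f="Fprim f k" and g="\<lambda>t. y0 k + t * e k" and x=0, OF d1 d2] by simp
  qed
  have der: "DERIV g 0 :> (\<Sum>k=1..int N + 2. p k / 2 * (2 * fdiff2 y0 (k - 2) * fdiff2 e (k - 2)))
     - (\<Sum>k=1..int N + 1. q k / 2 * (2 * fdiff y0 (k - 1) * fdiff e (k - 1)))
     + (\<Sum>k=1..int N. f k (y0 k) * e k)"
    unfolding geq
    by (intro DERIV_add DERIV_diff DERIV_sum DERIV_cmult dF)
       (auto intro!: derivative_eq_intros)
  have "g 0 \<le> g t" for t
  proof -
    have "yt 0 = y0" by (simp add: yt_def fun_eq_iff)
    then show ?thesis unfolding g_def using mn[OF ytE[of t]] by simp
  qed
  then have z: "(\<Sum>k=1..int N + 2. p k / 2 * (2 * fdiff2 y0 (k - 2) * fdiff2 e (k - 2)))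
     - (\<Sum>k=1..int N + 1. q k / 2 * (2 * fdiff y0 (k - 1) * fdiff e (k - 1)))
     + (\<Sum>k=1..int N. f k (y0 k) * e k) = 0"
    by (intro DERIV_local_min[OF der, of 1]) auto
  have SP: "(\<Sum>k=1..int N + 2. p k / 2 * (2 * fdiff2 y0 (k - 2) * fdiff2 e (k - 2))) = P i - 2 * P (i + 1) + P (i + 2)"
  proof -
    have "(\<Sum>k=1..int N + 2. p k / 2 * (2 * fdiff2 y0 (k - 2) * fdiff2 e (k - 2)))
      = (\<Sum>k=1..int N + 2. (if k = i then P k else 0) - 2 * (if k = i + 1 then P k else 0) + (if k = i + 2 then P k else 0))"
      by (rule sum.cong) (auto simp: f2_eq e_def P_def algebra_simps)
    also have "\<dots> = P i - 2 * P (i + 1) + P (i + 2)"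
      using i by (simp add: sum.distrib sum_subtractf sum_distrib_left[symmetric])
    finally show ?thesis .
  qed
  have SQ: "(\<Sum>k=1..int N + 1. q k / 2 * (2 * fdiff y0 (k - 1) * fdiff e (k - 1))) = Qf i - Qf (i + 1)"
  proof -
    have "(\<Sum>k=1..int N + 1. q k / 2 * (2 * fdiff y0 (k - 1) * fdiff e (k - 1)))
      = (\<Sum>k=1..int N + 1. (if k = i then Qf k else 0) - (if k = i + 1 then Qf k else 0))"
      by (rule sum.cong) (auto simp: fdiff_def e_def Qf_def algebra_simps)
    also have "\<dots> = Qf i - Qf (i + 1)"
      using i by (simp add: sum_subtractf)
    finally show ?thesis .
  qed
  have SF: "(\<Sum>k=1..int N. f k (y0 k) * e k) = f i (y0 i)"
  proof -
    have "(\<Sum>k=1..int N. f k (y0 k) * e k) = (\<Sum>k=1..int N. if k = i then f k (y0 k) else 0)"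
      by (rule sum.cong) (auto simp: e_def)
    then show ?thesis using i by simp
  qed
  have "(\<lambda>j. p j * fdiff2 y0 (j - 2)) = P" by (simp add: fun_eq_iff P_def)
  moreover have "(\<lambda>j. q j * fdiff y0 (j - 1)) = Qf" by (simp add: fun_eq_iff Qf_def)
  ultimately show ?thesis using z unfolding SP SQ SF
    by (simp add: f2_eq fdiff_def algebra_simps)
qed


theorem lemma6:
  fixes N :: nat and f :: "int \<Rightarrow> real \<Rightarrow> real" and p q :: "int \<Rightarrow> real"
  assumes "N \<ge> 1"
    and "\<forall>k \<in> {1..int N}. continuous_on UNIV (f k)"
    and "\<forall>k \<in> {1..int N}. \<exists>L :: ereal.
           ((\<lambda>s. ereal (f k s / s)) \<longlongrightarrow> L) at_top \<and> L > ereal (alpha1 N p q)"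
    and "\<exists>S > 0. \<forall>s \<ge> S. \<forall>k \<in> {1..int N}. f k (-s) \<le> - f k s"
  shows "coercive_on_E N (Jfun N p q f) \<and> (\<exists>y. is_solution N p q f y)"
proof -
  note N = assms(1) and cont = assms(2)
  define K where "K = {1..int N}"
  have Kfin: "finite K" and Kne: "K \<noteq> {}" using N by (auto simp: K_def)
  obtain S0 where S0: "S0 > 0" "\<And>s k. s \<ge> S0 \<Longrightarrow> k \<in> K \<Longrightarrow> f k (-s) \<le> - f k s"
    using assms(4) unfolding K_def by blast
  have ex: "\<forall>k\<in>K. \<exists>c. alpha1 N p q < c \<and> (\<exists>S'. \<forall>s\<ge>S'. c * s \<le> f k s)"
  proof
    fix k assume k: "k \<in> K"
    obtain L where L: "((\<lambda>s. ereal (f k s / s)) \<longlongrightarrow> L) at_top" "L > ereal (alpha1 N p q)"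
      using assms(3) k unfolding K_def by blast
    obtain c where c: "ereal (alpha1 N p q) < ereal c" "ereal c < L" using ereal_dense2[OF L(2)] by blast
    have "eventually (\<lambda>s. ereal c < ereal (f k s / s)) at_top" by (rule order_tendstoD(1)[OF L(1) c(2)])
    then obtain S' where S': "\<And>s. s \<ge> S' \<Longrightarrow> c < f k s / s" by (auto simp: eventually_at_top_linorder)
    have "\<forall>s \<ge> max S' 1. c * s \<le> f k s"
    proof (intro allI impI)
      fix s assume "max S' 1 \<le> s"
      then have "c < f k s / s" "s > 0" using S' by auto
      then show "c * s \<le> f k s" by (simp add: pos_less_divide_eq)
    qed
    then have "\<exists>S'. \<forall>s\<ge>S'. c * s \<le> f k s" by blast
    moreover have "alpha1 N p q < c" using c(1) by simp
    ultimately show "\<exists>c. alpha1 N p q < c \<and> (\<exists>S'. \<forall>s\<ge>S'. c * s \<le> f k s)" by blast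
  qed
  then obtain cf where cf1: "\<And>k. k \<in> K \<Longrightarrow> alpha1 N p q < cf k"
    and cf2: "\<And>k. k \<in> K \<Longrightarrow> \<exists>S'. \<forall>s\<ge>S'. cf k * s \<le> f k s"
    by metis
  define c where "c = Min (cf ` K)"
  have ck: "c \<le> cf k" if "k \<in> K" for k unfolding c_def using Kfin that by simp
  have ac: "alpha1 N p q < c" unfolding c_def using Kfin Kne cf1 by simp
  have exD: "\<forall>k\<in>K. \<exists>D. \<forall>t. Fprim f k t \<ge> c * t^2 / 2 - D"
  proof
    fix k assume k: "k \<in> K"
    obtain S' where S': "\<And>s. s \<ge> S' \<Longrightarrow> cf k * s \<le> f k s" using cf2[OF k] by blast
    define S where "S = max (max S0 S') 1"
    show "\<exists>D. \<forall>t. Fprim f k t \<ge> c * t^2 / 2 - D"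
    proof (rule quad_lower[where g = "f k" and S = S])
      show "DERIV (Fprim f k) x :> f k x" for x using Fprim_deriv[of f k x] cont k by (simp add: K_def)
      show "S > 0" by (simp add: S_def)
      show "c * s \<le> f k s" if "S \<le> s" for s
      proof -
        have "s \<ge> 0" "s \<ge> S'" using that by (auto simp: S_def)
        then have "c * s \<le> cf k * s" using ck[OF k] by (simp add: mult_right_mono)
        also have "\<dots> \<le> f k s" using S' \<open>s \<ge> S'\<close> by blast
        finally show ?thesis .
      qed
      show "f k (-s) \<le> - (c * s)" if "S \<le> s" for s
      proof -
        have "s \<ge> 0" "s \<ge> S'" "s \<ge> S0" using that by (auto simp: S_def)
        then have "c * s \<le> cf k * s" using ck[OF k] by (simp add: mult_right_mono)
        also have "\<dots> \<le> f k s" using S' \<open>s \<ge> S'\<close> by blast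
        finally have "c * s \<le> f k s" .
        moreover have "f k (-s) \<le> - f k s" using S0(2) \<open>s \<ge> S0\<close> k by blast
        ultimately show ?thesis by linarith
      qed
    qed
  qed
  then obtain Df where Df: "\<And>k t. k \<in> K \<Longrightarrow> Fprim f k t \<ge> c * t^2 / 2 - Df k" by metis
  define D where "D = (\<Sum>k\<in>K. \<bar>Df k\<bar>)"
  have FD: "Fprim f k t \<ge> c * t^2 / 2 - D" if "k \<in> {1..int N}" for k t
  proof -
    have "Df k \<le> \<bar>Df k\<bar>" by simp
    also have "\<bar>Df k\<bar> \<le> D" unfolding D_def by (rule member_le_sum) (use that Kfin in \<open>auto simp: K_def\<close>)
    finally show ?thesis using Df[of k t] that by (simp add: K_def)
  qed
  have Jlow: "Jfun N p q f y \<ge> (c - alpha1 N p q) / 2 * (\<Sum>k=1..int N. (y k)^2) - real N * D"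
    if "y \<in> Espace N" for y
    by (rule J_lower[OF that N FD])
  have coer: "coercive_on_E N (Jfun N p q f)"
    unfolding coercive_on_E_def
  proof
    fix M
    define B where "B = \<bar>M\<bar> + \<bar>real N * D\<bar>"
    define R where "R = sqrt (2 * B / (c - alpha1 N p q))"
    have R0: "R \<ge> 0" using ac by (simp add: R_def B_def)
    have R2: "R^2 = 2 * B / (c - alpha1 N p q)" using ac by (simp add: R_def B_def)
    show "\<exists>R. \<forall>y\<in>Espace N. R < Enorm N y \<longrightarrow> M < Jfun N p q f y"
    proof (intro exI ballI impI)
      fix y assume y: "y \<in> Espace N" and Ry: "R < Enorm N y"
      define s where "s = (\<Sum>k=1..int N. (y k)^2)"
      have s0: "s \<ge> 0" unfolding s_def by (simp add: sum_nonneg)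
      have "R^2 < (Enorm N y)^2" using Ry R0 by (simp add: power_strict_mono)
      also have "(Enorm N y)^2 = s" using s0 by (simp add: Enorm_def s_def)
      finally have "2 * B / (c - alpha1 N p q) < s" using R2 by simp
      then have "2 * B < s * (c - alpha1 N p q)" using ac by (simp add: pos_divide_less_eq)
      then have "B < (c - alpha1 N p q) / 2 * s" by (simp add: algebra_simps)
      moreover have "M + real N * D \<le> B" by (simp add: B_def)
      moreover have "Jfun N p q f y \<ge> (c - alpha1 N p q) / 2 * s - real N * D" using Jlow[OF y] by (simp add: s_def)
      ultimately show "M < Jfun N p q f y" by linarith
    qed
  qed
  define J0 where "J0 = Jfun N p q f (\<lambda>_. 0)"
  have zE: "(\<lambda>_. 0) \<in> Espace N" by (simp add: Espace_def)
  obtain R where R: "\<And>y. y \<in> Espace N \<Longrightarrow> R < Enorm N y \<Longrightarrow> J0 < Jfun N p q f y"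
    using coer unfolding coercive_on_E_def by blast
  define R' where "R' = max R 0"
  define Kb where "Kb = Pi\<^sub>E UNIV (\<lambda>k::int. if 1 \<le> k \<and> k \<le> int N then {-R'..R'} else {0::real})"
  have cKb: "compact Kb" unfolding Kb_def by (rule compact_box) auto
  have zK: "(\<lambda>_. 0) \<in> Kb" by (auto simp: Kb_def R'_def PiE_iff)
  then have Kbne: "Kb \<noteq> {}" by auto
  have cJ: "continuous_on Kb (Jfun N p q f)" by (rule continuous_on_subset[OF J_cont[OF cont]]) simp
  obtain y0 where y0K: "y0 \<in> Kb" and y0m: "\<And>y. y \<in> Kb \<Longrightarrow> Jfun N p q f y0 \<le> Jfun N p q f y"
    using continuous_attains_inf[OF cKb Kbne cJ] by blast
  have KbE: "y \<in> Espace N" if "y \<in> Kb" for y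
  proof -
    have "y k = 0" if "\<not> (1 \<le> k \<and> k \<le> int N)" for k
      using \<open>y \<in> Kb\<close> that unfolding Kb_def PiE_iff by (metis UNIV_I singletonD)
    then show ?thesis by (simp add: Espace_def)
  qed
  have y0E: "y0 \<in> Espace N" by (rule KbE[OF y0K])
  have gmin: "Jfun N p q f y0 \<le> Jfun N p q f y" if y: "y \<in> Espace N" for y
  proof (cases "R < Enorm N y")
    case True
    then have "J0 < Jfun N p q f y" using R y by blast
    moreover have "Jfun N p q f y0 \<le> J0" unfolding J0_def by (rule y0m[OF zK])
    ultimately show ?thesis by simp
  next
    case False
    define y' where "y' k = (if 1 \<le> k \<and> k \<le> int N then y k else 0)" for k
    have "y' \<in> Kb"
    proof -
      have "y' k \<in> (if 1 \<le> k \<and> k \<le> int N then {-R'..R'} else {0})" for k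
      proof (cases "1 \<le> k \<and> k \<le> int N")
        case True
        have "(y k)^2 \<le> (\<Sum>j=1..int N. (y j)^2)" by (rule member_le_sum) (use True in auto)
        then have "sqrt ((y k)^2) \<le> Enorm N y" unfolding Enorm_def by (rule real_sqrt_le_mono)
        then have "\<bar>y k\<bar> \<le> R'" using False by (simp add: R'_def)
        then show ?thesis using True by (simp add: y'_def abs_le_iff)
      next
        case False
        then show ?thesis by (auto simp: y'_def)
      qed
      then show ?thesis by (simp add: Kb_def PiE_iff)
    qed
    have "Jfun N p q f y' = Jfun N p q f y"
    proof (rule J_local)
      fix k :: int assume "-1 \<le> k" "k \<le> int N + 2"
      then show "y' k = y k" using espace_zero[OF y, of k] by (auto simp: y'_def)
    qed
    then show ?thesis using y0m[OF \<open>y' \<in> Kb\<close>] by simp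
  qed
  have "is_solution N p q f y0"
    unfolding is_solution_def
  proof (intro conjI ballI)
    show "y0 \<in> Espace N" by (rule y0E)
    fix k assume "k \<in> {1..int N}"
    then show "fdiff2 (\<lambda>j. p j * fdiff2 y0 (j - 2)) k + fdiff (\<lambda>j. q j * fdiff y0 (j - 1)) k + f k (y0 k) = 0"
      using EL[OF cont y0E, of p q] gmin by blast
  qed
  then show ?thesis using coer by blast
qed

end
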